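(* Suppose $w,w'\in[d]^n$ differ in exactly one coordinate, and let $\lambda=\mathrm{shRSK}(w)$, $\lambda'=\mathrm{shRSK}(w')$. Then for every $k\in[d]$: $|(\lambda_1+\cdots+\lambda_k)-(\lambda'_1+\cdots+\lambda'_k)|\le1$ and $|\lambda_k-\lambda'_k|\le2$.
   Context: $\mathrm{shRSK}(w)$ is the RSK shape of $w$: the Young diagram $\lambda_1\ge\cdots\ge\lambda_d\ge0$ whose first $k$ rows sum to the maximum total length of a union of $k$ disjoint weakly increasing subsequences of $w$. *)

theory Defs
  imports Main
begin

definition weakly_inc_positions :: "nat list \<Rightarrow> nat set \<Rightarrow> bool" where
  "weakly_inc_positions w S \<longleftrightarrow> S \<subseteq> {..<length w} \<and>
     (\<forall>i\<in>S. \<forall>j\<in>S. i < j \<longrightarrow> w ! i \<le> w ! j)"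

definition greene :: "nat list \<Rightarrow> nat \<Rightarrow> nat" where
  "greene w k = Max {card (\<Union>i<k. S i) | S.
      (\<forall>i<k. weakly_inc_positions w (S i)) \<and>
      (\<forall>i<k. \<forall>j<k. i \<noteq> j \<longrightarrow> S i \<inter> S j = {})}"

text \<open>shRSK w: row lengths lambda_1, lambda_2, ... (1-indexed), determined by
  lambda_1 + ... + lambda_k = greene w k.\<close>
definition shRSK :: "nat list \<Rightarrow> nat \<Rightarrow> nat" where
  "shRSK w k = greene w k - greene w (k - 1)"

end

theory Submission
  imports Defs
begin

definition validfam :: "nat list \<Rightarrow> nat \<Rightarrow> (nat \<Rightarrow> nat set) \<Rightarrow> bool" where
  "validfam w k S \<longleftrightarrow> (\<forall>i<k. weakly_inc_positions w (S i)) \<and>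
      (\<forall>i<k. \<forall>j<k. i \<noteq> j \<longrightarrow> S i \<inter> S j = {})"

lemma greene_alt: "greene w k = Max {card (\<Union>i<k. S i) | S. validfam w k S}"
  unfolding greene_def validfam_def by simp

lemma greene_set_fin: "finite {card (\<Union>i<k. S i) | S. validfam w k S}"
proof (rule finite_subset[of _ "{..length w}"])
  show "{card (\<Union>i<k. S i) | S. validfam w k S} \<subseteq> {..length w}"
  proof
    fix x assume "x \<in> {card (\<Union>i<k. S i) | S. validfam w k S}"
    then obtain S where x: "x = card (\<Union>i<k. S i)" and v: "validfam w k S" by blast
    have "(\<Union>i<k. S i) \<subseteq> {..<length w}"
      using v unfolding validfam_def weakly_inc_positions_def by blast
    hence "card (\<Union>i<k. S i) \<le> card {..<length w}" by (intro card_mono) auto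
    thus "x \<in> {..length w}" using x by simp
  qed
qed simp

lemma greene_set_ne: "{card (\<Union>i<k. S i) | S. validfam w k S} \<noteq> {}"
proof -
  have "validfam w k (\<lambda>_. {})" unfolding validfam_def weakly_inc_positions_def by simp
  thus ?thesis by blast
qed

lemma greene_ge: "validfam w k S \<Longrightarrow> card (\<Union>i<k. S i) \<le> greene w k"
  unfolding greene_alt by (rule Max_ge[OF greene_set_fin]) blast

lemma greene_obt: "\<exists>S. validfam w k S \<and> card (\<Union>i<k. S i) = greene w k"
proof -
  have "greene w k \<in> {card (\<Union>i<k. S i) | S. validfam w k S}"
    unfolding greene_alt by (rule Max_in[OF greene_set_fin greene_set_ne])
  thus ?thesis by auto
qed

lemma greene_0: "greene w 0 = 0"
  using greene_obt[of w 0] by auto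

lemma greene_mono_Suc: "greene w k \<le> greene w (Suc k)"
proof -
  obtain S where v: "validfam w k S" and c: "card (\<Union>i<k. S i) = greene w k"
    using greene_obt by blast
  define S' where "S' = S(k := {})"
  have v': "validfam w (Suc k) S'"
    using v unfolding validfam_def S'_def weakly_inc_positions_def
    by (auto simp: less_Suc_eq)
  have "(\<Union>i<Suc k. S' i) = (\<Union>i<k. S i)"
    unfolding S'_def by (auto simp: less_Suc_eq)
  thus ?thesis using greene_ge[OF v'] c by simp
qed

lemma greene_change:
  assumes len: "length w = length w'" and eqs: "\<And>i. i < length w \<Longrightarrow> i \<noteq> p \<Longrightarrow> w ! i = w' ! i"
  shows "greene w k \<le> greene w' k + 1"
proof -
  obtain S where v: "validfam w k S" and c: "card (\<Union>i<k. S i) = greene w k"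
    using greene_obt by blast
  have v1: "\<And>i. i < k \<Longrightarrow> S i \<subseteq> {..<length w}"
    using v unfolding validfam_def weakly_inc_positions_def by blast
  have v2: "\<And>i a b. i < k \<Longrightarrow> a \<in> S i \<Longrightarrow> b \<in> S i \<Longrightarrow> a < b \<Longrightarrow> w ! a \<le> w ! b"
    using v unfolding validfam_def weakly_inc_positions_def by blast
  have v3: "\<And>i j. i < k \<Longrightarrow> j < k \<Longrightarrow> i \<noteq> j \<Longrightarrow> S i \<inter> S j = {}"
    using v unfolding validfam_def by blast
  define S' where "S' = (\<lambda>i. S i - {p})"
  have w1: "S' i \<subseteq> {..<length w'}" if "i < k" for i
    using v1[OF that] len unfolding S'_def by auto
  have w2: "w' ! a \<le> w' ! b" if "i < k" "a \<in> S' i" "b \<in> S' i" "a < b" for i a b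
  proof -
    have ab: "a \<in> S i" "b \<in> S i" "a \<noteq> p" "b \<noteq> p" using that unfolding S'_def by auto
    have "a < length w" "b < length w" using v1[OF that(1)] ab by auto
    hence "w' ! a = w ! a" "w' ! b = w ! b" using eqs ab by auto
    thus ?thesis using v2[OF that(1) ab(1) ab(2) that(4)] by simp
  qed
  have w3: "S' i \<inter> S' j = {}" if "i < k" "j < k" "i \<noteq> j" for i j
    using v3[OF that] unfolding S'_def by auto
  have v': "validfam w' k S'"
    unfolding validfam_def weakly_inc_positions_def using w1 w2 w3 by blast
  have U: "(\<Union>i<k. S' i) = (\<Union>i<k. S i) - {p}" unfolding S'_def by auto
  have "(\<Union>i<k. S i) \<subseteq> {..<length w}" using v1 by blast
  hence fin: "finite (\<Union>i<k. S i)" using finite_subset by blast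
  have "card (\<Union>i<k. S i) \<le> card ((\<Union>i<k. S i) - {p}) + 1"
    using fin by (cases "p \<in> (\<Union>i<k. S i)") (simp_all add: card_Diff_singleton)
  thus ?thesis using greene_ge[OF v'] c U by simp
qed

lemma sum_sh: "(\<Sum>j=1..k. shRSK w j) = greene w k"
proof (induction k)
  case 0 thus ?case by (simp add: greene_0)
next
  case (Suc k)
  have "(\<Sum>j=1..Suc k. shRSK w j) = (\<Sum>j=1..k. shRSK w j) + shRSK w (Suc k)" by simp
  also have "\<dots> = greene w (Suc k)" using Suc greene_mono_Suc[of w k]
    by (simp add: shRSK_def)
  finally show ?case .
qed

theorem mainTheorem11:
  fixes d n :: nat and w w' :: "nat list"
  assumes "length w = n" and "length w' = n"
    and "set w \<subseteq> {1..d}" and "set w' \<subseteq> {1..d}"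
    and "card {i. i < n \<and> w ! i \<noteq> w' ! i} = 1"
  shows "\<forall>k\<in>{1..d}.
     \<bar>int (\<Sum>j=1..k. shRSK w j) - int (\<Sum>j=1..k. shRSK w' j)\<bar> \<le> 1 \<and>
     \<bar>int (shRSK w k) - int (shRSK w' k)\<bar> \<le> 2"
proof -
  obtain p where P: "{i. i < n \<and> w ! i \<noteq> w' ! i} = {p}"
    using assms(5) card_1_singletonE by blast
  have eq: "\<And>i. i < n \<Longrightarrow> i \<noteq> p \<Longrightarrow> w ! i = w' ! i" using P by blast
  have a: "\<And>k. greene w k \<le> greene w' k + 1"
    by (rule greene_change[where p=p]) (use assms eq in auto)
  have b: "\<And>k. greene w' k \<le> greene w k + 1"
    by (rule greene_change[where p=p]) (use assms eq in auto)
  show ?thesis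
  proof (intro ballI conjI)
    fix k
    show "\<bar>int (\<Sum>j=1..k. shRSK w j) - int (\<Sum>j=1..k. shRSK w' j)\<bar> \<le> 1"
      unfolding sum_sh using a[of k] b[of k] by linarith
    have m1: "greene w (k-1) \<le> greene w k" "greene w' (k-1) \<le> greene w' k"
      by (cases k; simp add: greene_mono_Suc)+
    show "\<bar>int (shRSK w k) - int (shRSK w' k)\<bar> \<le> 2"
      unfolding shRSK_def using a[of k] b[of k] a[of "k-1"] b[of "k-1"] m1 by linarith
  qed
qed

end
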